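(* Let $\mathcal{P}_*$ be the nonempty powerset monad on $\mathbf{Sets}$, and let $\mathcal{K}\ell(\mathcal{P}_* )_{+1}$ be the category whose objects are sets and whose morphisms $X\to Y$ are functions $f\colon X\to\mathcal{P}_*(Y+1)$, with composition $(g\odot f)(x)=\bigcup_{y\in f(x)\cap Y} g(y)\,\cup\,\{*\mid *\in f(x)\}$ for $g\colon Y\to\mathcal{P}_*(Z+1)$. Define $\square\colon\mathcal{K}\ell(\mathcal{P}_* )_{+1}\to\mathbf{PoSets}^{\mathrm{op}}$ by $\square(X)=\mathcal{P}(X)$ (ordered by inclusion) and, for $f\colon X\to\mathcal{P}_*(Y+1)$ and $Q\subseteq Y$, $\square(f)(Q)=\{x\in X\mid \forall y\in Y.\ y\in f(x)\Rightarrow y\in Q\}$. Then the forgetful functor $U\colon\int\square\to\mathcal{K}\ell(\mathcal{P}_* )_{+1}$ has a left adjoint $0$ with $0(X)=(X,\emptyset)$ and a right adjoint $1$ with $1(X)=(X,X)$; moreover there is a functor (comprehension) $\int\square\to\mathcal{K}\ell(\mathcal{P}_* )_{+1}$ with $(X,P)\mapsto P$ which is right adjoint to $1$, and a functor (quotient) with $(X,P)\mapsto\neg P=X\setminus P$ which is left adjoint to $0$.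
   Context: $Y+1=Y\sqcup\{*\}$. For a functor $F\colon\mathcal{B}\to\mathbf{PoSets}^{\mathrm{op}}$, $\int F$ is the category with objects $(X,P)$, $P\in F(X)$, and morphisms $f\colon(X,P)\to(Y,Q)$ the morphisms $f\colon X\to Y$ of $\mathcal{B}$ with $P\le F(f)(Q)$; the forgetful functor sends $(X,P)\mapsto X$, $f\mapsto f$; $0$ and $1$ act as identity on morphisms. *)

theory Defs
  imports Main
begin

record ('o, 'm) cat =
  Ob   :: "'o set"
  Hom  :: "'o \<Rightarrow> 'o \<Rightarrow> 'm set"
  Comp :: "'m \<Rightarrow> 'm \<Rightarrow> 'm"   (* Comp g f = g after f *)
  Ident :: "'o \<Rightarrow> 'm"

definition is_functor ::
  "('o, 'm) cat \<Rightarrow> ('p, 'n) cat \<Rightarrow> ('o \<Rightarrow> 'p) \<Rightarrow> ('o \<Rightarrow> 'o \<Rightarrow> 'm \<Rightarrow> 'n) \<Rightarrow> bool" where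
  "is_functor C D Fo Fm \<longleftrightarrow>
     (\<forall>c\<in>Ob C. Fo c \<in> Ob D) \<and>
     (\<forall>c\<in>Ob C. \<forall>c'\<in>Ob C. \<forall>f\<in>Hom C c c'. Fm c c' f \<in> Hom D (Fo c) (Fo c')) \<and>
     (\<forall>c\<in>Ob C. Fm c c (Ident C c) = Ident D (Fo c)) \<and>
     (\<forall>c\<in>Ob C. \<forall>c'\<in>Ob C. \<forall>c''\<in>Ob C. \<forall>f\<in>Hom C c c'. \<forall>g\<in>Hom C c' c''.
        Fm c c'' (Comp C g f) = Comp D (Fm c' c'' g) (Fm c c' f))"

definition is_left_adjoint ::
  "('o, 'm) cat \<Rightarrow> ('p, 'n) cat \<Rightarrow> ('o \<Rightarrow> 'p) \<Rightarrow> ('o \<Rightarrow> 'o \<Rightarrow> 'm \<Rightarrow> 'n)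
     \<Rightarrow> ('p \<Rightarrow> 'o) \<Rightarrow> ('p \<Rightarrow> 'p \<Rightarrow> 'n \<Rightarrow> 'm) \<Rightarrow> bool" where
  "is_left_adjoint C D Lo Lm Ro Rm \<longleftrightarrow>
     is_functor C D Lo Lm \<and> is_functor D C Ro Rm \<and>
     (\<exists>\<phi> :: 'o \<Rightarrow> 'p \<Rightarrow> 'n \<Rightarrow> 'm.
        (\<forall>c\<in>Ob C. \<forall>d\<in>Ob D. bij_betw (\<phi> c d) (Hom D (Lo c) d) (Hom C c (Ro d))) \<and>
        (\<forall>c\<in>Ob C. \<forall>c'\<in>Ob C. \<forall>d\<in>Ob D. \<forall>d'\<in>Ob D.
          \<forall>h\<in>Hom C c' c. \<forall>k\<in>Hom D d d'. \<forall>f\<in>Hom D (Lo c) d.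
            \<phi> c' d' (Comp D k (Comp D f (Lm c' c h)))
              = Comp C (Rm d d' k) (Comp C (\<phi> c d f) h)))"

text \<open>Objects are sets X :: 'a set (of an arbitrary universe type 'a); Y+1 is
  represented by 'a option with None = *. A morphism X \<rightarrow> Y is a function
  f : X \<rightarrow> P_*(Y+1), represented extensionally (f x = {} outside X).\<close>

definition KHom :: "'a set \<Rightarrow> 'a set \<Rightarrow> ('a \<Rightarrow> 'a option set) set" where
  "KHom X Y = {f. (\<forall>x\<in>X. f x \<noteq> {} \<and> f x \<subseteq> insert None (Some ` Y)) \<and> (\<forall>x. x \<notin> X \<longrightarrow> f x = {})}"

definition KComp :: "('a \<Rightarrow> 'a option set) \<Rightarrow> ('a \<Rightarrow> 'a option set) \<Rightarrow> ('a \<Rightarrow> 'a option set)" where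
  "KComp g f = (\<lambda>x. (\<Union>y\<in>{y. Some y \<in> f x}. g y) \<union> {z. z = None \<and> None \<in> f x})"

definition KId :: "'a set \<Rightarrow> ('a \<Rightarrow> 'a option set)" where
  "KId X = (\<lambda>x. if x \<in> X then {Some x} else {})"

definition KlP :: "('a set, 'a \<Rightarrow> 'a option set) cat" where
  "KlP = \<lparr>Ob = UNIV, Hom = KHom, Comp = KComp, Ident = KId\<rparr>"

definition box :: "'a set \<Rightarrow> 'a set \<Rightarrow> ('a \<Rightarrow> 'a option set) \<Rightarrow> 'a set \<Rightarrow> 'a set" where
  "box X Y f Q = {x\<in>X. \<forall>y\<in>Y. Some y \<in> f x \<longrightarrow> y \<in> Q}"

definition IntHom :: "'a set \<times> 'a set \<Rightarrow> 'a set \<times> 'a set \<Rightarrow> ('a \<Rightarrow> 'a option set) set" where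
  "IntHom XP YQ = {f \<in> KHom (fst XP) (fst YQ). snd XP \<subseteq> box (fst XP) (fst YQ) f (snd YQ)}"

definition IntBox :: "('a set \<times> 'a set, 'a \<Rightarrow> 'a option set) cat" where
  "IntBox = \<lparr>Ob = {(X, P). P \<subseteq> X}, Hom = IntHom, Comp = KComp, Ident = (\<lambda>XP. KId (fst XP))\<rparr>"

end

theory Submission
  imports Defs
begin

lemma KlP_simps[simp]: "Ob KlP = UNIV" "Hom KlP = KHom" "Comp KlP = KComp" "Ident KlP = KId"
  by (simp_all add: KlP_def)
lemma IntBox_simps[simp]: "Ob IntBox = {(X,P). P \<subseteq> X}" "Hom IntBox = IntHom" "Comp IntBox = KComp"
   "Ident IntBox = (\<lambda>XP. KId (fst XP))"
  by (simp_all add: IntBox_def)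

lemma bij_id_eq: "A = B \<Longrightarrow> bij_betw (\<lambda>f. f) A B"
  by (simp add: bij_betw_def)

lemma p1: "is_left_adjoint (KlP :: ('a set, 'a \<Rightarrow> 'a option set) cat) IntBox (\<lambda>X. (X, {})) (\<lambda>_ _ f. f) fst (\<lambda>_ _ f. f)"
  unfolding is_left_adjoint_def is_functor_def
  apply (intro conjI)
  apply (auto simp: IntHom_def box_def)[8]
  apply (rule exI[of _ "\<lambda>_ _ f. f"])
  apply (auto intro!: bij_id_eq simp: IntHom_def box_def)
  done

lemma p2: "is_left_adjoint (IntBox :: ('a set \<times> 'a set, 'a \<Rightarrow> 'a option set) cat) KlP fst (\<lambda>_ _ f. f) (\<lambda>X. (X, X)) (\<lambda>_ _ f. f)"
  unfolding is_left_adjoint_def is_functor_def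
  apply (intro conjI)
  apply (auto simp: IntHom_def box_def)[8]
  apply (rule exI[of _ "\<lambda>_ _ f. f"])
  apply (auto intro!: bij_id_eq simp: IntHom_def box_def)
  done

definition Cm :: "'a set \<times> 'a set \<Rightarrow> 'a set \<times> 'a set \<Rightarrow> ('a \<Rightarrow> 'a option set) \<Rightarrow> ('a \<Rightarrow> 'a option set)" where
  "Cm YQ ZR g = (\<lambda>y. if y \<in> snd YQ then g y else {})"

lemma hom3: "Q \<subseteq> Y \<Longrightarrow> IntHom (X, X) (Y, Q) = KHom X Q"
  by (auto simp: IntHom_def box_def KHom_def; blast)

lemma cm_hom: assumes "b \<subseteq> a" "f \<in> IntHom (a, b) (aa, ba)"
  shows "(\<lambda>y. if y \<in> b then f y else {}) \<in> KHom b ba"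
proof -
  have "\<forall>y\<in>b. f y \<subseteq> insert None (Some ` ba)"
  proof (intro ballI subsetI)
    fix y z assume y: "y \<in> b" and z: "z \<in> f y"
    show "z \<in> insert None (Some ` ba)"
    proof (cases z)
      case (Some w)
      have yb: "\<forall>y'\<in>aa. Some y' \<in> f y \<longrightarrow> y' \<in> ba" "y \<in> a" using assms(2) y by (auto simp: IntHom_def box_def)
      have "f y \<subseteq> insert None (Some ` aa)" using assms(2) yb(2) by (auto simp: IntHom_def KHom_def)
      with Some z have "w \<in> aa" by auto
      with yb Some z show ?thesis by auto
    qed simp
  qed
  with assms show ?thesis by (auto simp: IntHom_def KHom_def)
qed

lemma nat3: assumes h: "h \<in> KHom X' X" and f: "f \<in> IntHom (X,X) (Y,Q)"
  shows "KComp k (KComp f h) = KComp (Cm (Y,Q) d' k) (KComp f h)"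
proof -
  have Q: "y \<in> Q" if "Some y \<in> KComp f h x" for x y
  proof -
    from that obtain z where z: "Some z \<in> h x" "Some y \<in> f z" by (auto simp: KComp_def)
    have "z \<in> X" using z(2) f by (auto simp: IntHom_def KHom_def)
    moreover have "f z \<subseteq> insert None (Some ` Y)" using f \<open>z \<in> X\<close> by (auto simp: IntHom_def KHom_def)
    ultimately show ?thesis using z(2) f by (auto simp: IntHom_def box_def)
  qed
  show ?thesis unfolding KComp_def[of k] KComp_def[of "Cm (Y,Q) d' k"]
    by (rule ext) (auto simp: Cm_def dest: Q)
qed

lemma p3: "is_left_adjoint (KlP :: ('a set, 'a \<Rightarrow> 'a option set) cat) IntBox (\<lambda>X. (X, X)) (\<lambda>_ _ f. f) snd Cm"
  unfolding is_left_adjoint_def is_functor_def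
  apply (intro conjI)
  apply (auto simp: IntHom_def box_def)[5]
  subgoal by (auto simp: Cm_def) (metis cm_hom)
  subgoal by (auto simp: Cm_def KId_def fun_eq_iff)
  subgoal by (auto simp: Cm_def KComp_def IntHom_def box_def KHom_def fun_eq_iff; blast)
  apply (rule exI[of _ "\<lambda>_ _ f. f"])
  apply (intro conjI ballI)
  subgoal for c d apply (cases d) apply (rule bij_id_eq) apply clarsimp apply (erule hom3) done
  by (auto intro!: nat3)

definition Qm :: "'a set \<times> 'a set \<Rightarrow> 'a set \<times> 'a set \<Rightarrow> ('a \<Rightarrow> 'a option set) \<Rightarrow> ('a \<Rightarrow> 'a option set)" where
  "Qm XP YQ f = (\<lambda>x. if x \<in> fst XP - snd XP then
      {z. \<exists>y. z = Some y \<and> Some y \<in> f x \<and> y \<notin> snd YQ} \<union> {z. z = None \<and> (None \<in> f x \<or> (\<exists>y\<in>snd YQ. Some y \<in> f x))}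
     else {})"

definition phi4 :: "'a set \<times> 'a set \<Rightarrow> 'a set \<Rightarrow> ('a \<Rightarrow> 'a option set) \<Rightarrow> ('a \<Rightarrow> 'a option set)" where
  "phi4 XP Y g = (\<lambda>x. if x \<in> snd XP then {None} else g x)"

lemma qm_hom: assumes "f \<in> IntHom (X,P) (Y,Q)"
  shows "Qm (X,P) (Y,Q) f \<in> KHom (X-P) (Y-Q)"
proof -
  have ne: "Qm (X,P) (Y,Q) f x \<noteq> {}" if x: "x \<in> X - P" for x
  proof -
    have "f x \<noteq> {}" using x assms by (auto simp: IntHom_def KHom_def)
    then obtain z where z: "z \<in> f x" by blast
    show ?thesis
    proof (cases z)
      case None with z x show ?thesis by (auto simp: Qm_def)
    next
      case (Some y) with z x show ?thesis by (cases "y \<in> Q") (auto simp: Qm_def)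
    qed
  qed
  have sub: "Qm (X,P) (Y,Q) f x \<subseteq> insert None (Some ` (Y-Q))" if x: "x \<in> X - P" for x
  proof
    fix z assume z: "z \<in> Qm (X,P) (Y,Q) f x"
    have fx: "f x \<subseteq> insert None (Some ` Y)" using assms x by (auto simp: IntHom_def KHom_def)
    show "z \<in> insert None (Some ` (Y-Q))"
    proof (cases z)
      case (Some y)
      with z x have "Some y \<in> f x" "y \<notin> Q" by (auto simp: Qm_def)
      with fx Some show ?thesis by auto
    qed simp
  qed
  show ?thesis using ne sub by (auto simp: KHom_def Qm_def)
qed

lemma qm_id: "P \<subseteq> X \<Longrightarrow> Qm (X,P) (X,P) (KId X) = KId (X-P)"
  by (auto simp: Qm_def KId_def fun_eq_iff)

lemma qm_comp:
  assumes f: "f \<in> IntHom (X,P) (Y,Q)" and g: "g \<in> IntHom (Y,Q) (Z,R)"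
  shows "Qm (X,P) (Z,R) (KComp g f) = KComp (Qm (Y,Q) (Z,R) g) (Qm (X,P) (Y,Q) f)"
proof (rule ext)
  fix x
  show "Qm (X,P) (Z,R) (KComp g f) x = KComp (Qm (Y,Q) (Z,R) g) (Qm (X,P) (Y,Q) f) x"
  proof (cases "x \<in> X - P")
    case False thus ?thesis by (auto simp: Qm_def KComp_def)
  next
    case True
    have fY: "\<And>y. Some y \<in> f x \<Longrightarrow> y \<in> Y" using f True by (auto simp: IntHom_def KHom_def)
    have gQ: "\<And>y w. y \<in> Q \<Longrightarrow> Some w \<in> g y \<Longrightarrow> w \<in> R"
    proof -
      fix y w assume y: "y \<in> Q" and w: "Some w \<in> g y"
      have "y \<in> Y" using w g by (auto simp: IntHom_def KHom_def)
      hence "g y \<subseteq> insert None (Some ` Z)" using g by (auto simp: IntHom_def KHom_def)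
      with w have "w \<in> Z" by auto
      with y w g show "w \<in> R" by (auto simp: IntHom_def box_def)
    qed
    have gne: "\<And>y. y \<in> Y \<Longrightarrow> \<exists>z. z \<in> g y" using g by (auto simp: IntHom_def KHom_def)
    have gY: "\<And>y. g y \<noteq> {} \<Longrightarrow> y \<in> Y" using g by (auto simp: IntHom_def KHom_def)
    show ?thesis
    proof (rule set_eqI)
      fix z
      show "z \<in> Qm (X,P) (Z,R) (KComp g f) x \<longleftrightarrow> z \<in> KComp (Qm (Y,Q) (Z,R) g) (Qm (X,P) (Y,Q) f) x"
      proof (cases z)
        case None
        show ?thesis
        proof
          assume "z \<in> Qm (X,P) (Z,R) (KComp g f) x"
          then have "None \<in> f x \<or> (\<exists>y. Some y \<in> f x \<and> (None \<in> g y \<or> (\<exists>w\<in>R. Some w \<in> g y)))"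
            using True None by (auto simp: Qm_def KComp_def)
          then show "z \<in> KComp (Qm (Y,Q) (Z,R) g) (Qm (X,P) (Y,Q) f) x"
          proof
            assume "None \<in> f x" thus ?thesis using True None by (auto simp: Qm_def KComp_def)
          next
            assume "\<exists>y. Some y \<in> f x \<and> (None \<in> g y \<or> (\<exists>w\<in>R. Some w \<in> g y))"
            then obtain y where y: "Some y \<in> f x" "None \<in> g y \<or> (\<exists>w\<in>R. Some w \<in> g y)" by blast
            have "y \<in> Y" using fY y by blast
            show ?thesis
            proof (cases "y \<in> Q")
              case True' : True
              thus ?thesis using True None y by (auto simp: Qm_def KComp_def)
            next
              case False
              then have "Some y \<in> Qm (X,P) (Y,Q) f x" using True y by (auto simp: Qm_def)
              moreover have "None \<in> Qm (Y,Q) (Z,R) g y" using y False \<open>y \<in> Y\<close> by (auto simp: Qm_def)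
              ultimately show ?thesis using None by (auto simp: KComp_def)
            qed
          qed
        next
          assume "z \<in> KComp (Qm (Y,Q) (Z,R) g) (Qm (X,P) (Y,Q) f) x"
          then have "None \<in> f x \<or> (\<exists>y\<in>Q. Some y \<in> f x) \<or> (\<exists>y. Some y \<in> f x \<and> y \<notin> Q \<and> (None \<in> g y \<or> (\<exists>w\<in>R. Some w \<in> g y)))"
            using True None by (auto simp: Qm_def KComp_def split: if_splits)
          then show "z \<in> Qm (X,P) (Z,R) (KComp g f) x"
          proof (elim disjE)
            assume "\<exists>y\<in>Q. Some y \<in> f x"
            then obtain y where y: "y \<in> Q" "Some y \<in> f x" by blast
            obtain u where u: "u \<in> g y" using gne fY y by blast
            show ?thesis
            proof (cases u)
              case None thus ?thesis using u y True \<open>z = None\<close> by (auto simp: Qm_def KComp_def)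
            next
              case (Some w) hence "w \<in> R" using gQ y u by blast
              thus ?thesis using u y True \<open>z = None\<close> Some by (auto simp: Qm_def KComp_def)
            qed
          qed (use True None in \<open>auto simp: Qm_def KComp_def\<close>)
        qed
      next
        case (Some w)
        show ?thesis
        proof
          assume "z \<in> Qm (X,P) (Z,R) (KComp g f) x"
          then obtain y where y: "Some y \<in> f x" "Some w \<in> g y" "w \<notin> R"
            using True Some by (auto simp: Qm_def KComp_def)
          have "y \<notin> Q" using gQ y by blast
          moreover have "y \<in> Y" using fY y by blast
          ultimately show "z \<in> KComp (Qm (Y,Q) (Z,R) g) (Qm (X,P) (Y,Q) f) x"
            using y True Some by (auto simp: Qm_def KComp_def)
        next
          assume "z \<in> KComp (Qm (Y,Q) (Z,R) g) (Qm (X,P) (Y,Q) f) x"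
          then obtain y where y: "Some y \<in> Qm (X,P) (Y,Q) f x" "Some w \<in> Qm (Y,Q) (Z,R) g y"
            using Some by (auto simp: KComp_def)
          then show "z \<in> Qm (X,P) (Z,R) (KComp g f) x"
            using True Some by (auto simp: Qm_def KComp_def split: if_splits)
        qed
      qed
    qed
  qed
qed


lemma P_none: assumes "f \<in> IntHom (X,P) (Y,{})" "x \<in> P" "P \<subseteq> X" shows "f x = {None}"
proof -
  have "x \<in> X" using assms by auto
  hence ne: "f x \<noteq> {}" and sub: "f x \<subseteq> insert None (Some ` Y)" using assms by (auto simp: IntHom_def KHom_def)
  have "\<forall>y\<in>Y. Some y \<notin> f x" using assms by (auto simp: IntHom_def box_def)
  with sub have "f x \<subseteq> {None}" by auto
  with ne show ?thesis by blast
qed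

lemma phi_bij: assumes "P \<subseteq> X" shows "bij_betw (phi4 (X,P) Y) (KHom (X-P) Y) (IntHom (X,P) (Y,{}))"
proof (rule bij_betw_byWitness[where f' = "\<lambda>g x. if x \<in> P then {} else g x"])
  show "\<forall>a\<in>KHom (X - P) Y. (\<lambda>x. if x \<in> P then {} else phi4 (X, P) Y a x) = a"
    by (auto simp: KHom_def phi4_def fun_eq_iff)
  show "\<forall>a'\<in>IntHom (X, P) (Y, {}). phi4 (X, P) Y (\<lambda>x. if x \<in> P then {} else a' x) = a'"
  proof
    fix a' assume a': "a' \<in> IntHom (X, P) (Y, {})"
    show "phi4 (X, P) Y (\<lambda>x. if x \<in> P then {} else a' x) = a'"
      by (rule ext) (simp add: phi4_def P_none[OF a' _ assms])
  qed
  show "phi4 (X, P) Y ` KHom (X - P) Y \<subseteq> IntHom (X, P) (Y, {})"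
    using assms by (auto simp: KHom_def phi4_def IntHom_def box_def split: if_splits; blast)
  show "(\<lambda>g x. if x \<in> P then {} else g x) ` IntHom (X, P) (Y, {}) \<subseteq> KHom (X - P) Y"
    using assms by (auto simp: KHom_def IntHom_def split: if_splits; blast)
qed

lemma nat4:
  assumes P: "P \<subseteq> X" and P': "P' \<subseteq> X'" and h: "h \<in> IntHom (X',P') (X,P)" and f: "f \<in> KHom (X-P) Y"
  shows "phi4 (X',P') Y' (KComp k (KComp f (Qm (X',P') (X,P) h))) = KComp k (KComp (phi4 (X,P) Y f) h)"
proof (rule ext)
  fix x
  have hX: "\<And>y. Some y \<in> h x \<Longrightarrow> y \<in> X" using h by (auto simp: IntHom_def KHom_def)
  have hX': "h x \<noteq> {} \<Longrightarrow> x \<in> X'" using h by (auto simp: IntHom_def KHom_def)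
  have fX: "\<And>y. y \<notin> X - P \<Longrightarrow> f y = {}" using f by (auto simp: KHom_def)
  show "phi4 (X',P') Y' (KComp k (KComp f (Qm (X',P') (X,P) h))) x = KComp k (KComp (phi4 (X,P) Y f) h) x"
  proof (cases "x \<in> P'")
    case True
    have hne: "h x \<noteq> {}" using h True P' by (auto simp: IntHom_def KHom_def)
    have hP: "\<And>y. Some y \<in> h x \<Longrightarrow> y \<in> P" using h True hX by (auto simp: IntHom_def box_def)
    have "KComp (phi4 (X,P) Y f) h x = {None}"
    proof
      show "KComp (phi4 (X,P) Y f) h x \<subseteq> {None}" using hP by (auto simp: KComp_def phi4_def)
      obtain u where u: "u \<in> h x" using hne by blast
      show "{None} \<subseteq> KComp (phi4 (X,P) Y f) h x"
      proof (cases u)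
        case None thus ?thesis using u by (auto simp: KComp_def)
      next
        case (Some y) thus ?thesis using u hP[of y] by (auto simp: KComp_def phi4_def)
      qed
    qed
    hence "KComp k (KComp (phi4 (X,P) Y f) h) x = {None}"
      unfolding KComp_def[of k] by simp
    thus ?thesis using True by (simp add: phi4_def)
  next
    case False
    have "KComp f (Qm (X',P') (X,P) h) x = KComp (phi4 (X,P) Y f) h x"
    proof (cases "x \<in> X'")
      case False
      hence "h x = {}" using hX' by blast
      thus ?thesis using False by (auto simp: KComp_def Qm_def)
    next
      case True
      show ?thesis using True \<open>x \<notin> P'\<close> hX fX by (auto simp: KComp_def Qm_def phi4_def)
    qed
    hence "KComp k (KComp f (Qm (X',P') (X,P) h)) x = KComp k (KComp (phi4 (X,P) Y f) h) x"
      unfolding KComp_def[of k] by simp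
    thus ?thesis using False by (simp add: phi4_def)
  qed
qed


lemma p4: "is_left_adjoint (IntBox :: ('a set \<times> 'a set, 'a \<Rightarrow> 'a option set) cat) KlP (\<lambda>XP. fst XP - snd XP) Qm (\<lambda>X. (X, {})) (\<lambda>_ _ f. f)"
  unfolding is_left_adjoint_def is_functor_def
  apply (intro conjI)
  subgoal by simp
  subgoal by (clarsimp simp: qm_hom)
  subgoal by (clarsimp simp: qm_id)
  subgoal by (clarsimp simp: qm_comp)
  apply (auto simp: IntHom_def box_def)[4]
  apply (rule exI[of _ phi4])
  apply (intro conjI ballI)
  subgoal by (clarsimp simp: phi_bij)
  subgoal by (clarsimp simp: nat4)
  done

theorem proposition3p3:
  shows
    "is_left_adjoint (KlP :: ('a set, 'a \<Rightarrow> 'a option set) cat) IntBox (\<lambda>X. (X, {})) (\<lambda>_ _ f. f) fst (\<lambda>_ _ f. f)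
     \<and> is_left_adjoint (IntBox :: ('a set \<times> 'a set, 'a \<Rightarrow> 'a option set) cat) KlP fst (\<lambda>_ _ f. f) (\<lambda>X. (X, X)) (\<lambda>_ _ f. f)
     \<and> (\<exists>Cm. is_left_adjoint (KlP :: ('a set, 'a \<Rightarrow> 'a option set) cat) IntBox (\<lambda>X. (X, X)) (\<lambda>_ _ f. f) snd Cm)
     \<and> (\<exists>Qm. is_left_adjoint (IntBox :: ('a set \<times> 'a set, 'a \<Rightarrow> 'a option set) cat) KlP (\<lambda>XP. fst XP - snd XP) Qm (\<lambda>X. (X, {})) (\<lambda>_ _ f. f))"
  using p1 p2 p3 p4 by blast

end
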